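(* Let $m_1,m_2,m_3>0$ with $m_1+m_2+m_3=1$, and consider the Hamiltonian of the spatial restricted four-body problem in the synodic (rotating) frame, $$H=\tfrac12(p_x^2+p_y^2+p_z^2)+yp_x-xp_y-\frac{m_1}{r_1}-\frac{m_2}{r_2}-\frac{m_3}{r_3},\qquad r_i=\sqrt{(x-x_i)^2+(y-y_i)^2+z^2},$$ where $(x_i,y_i,0)$ are the positions of the primaries, given by (with $K=m_2(m_3-m_2)+m_1(m_2+2m_3)$ and $S=\sqrt{m_2^2+m_2m_3+m_3^2}$) $$x_1=-\frac{|K|S}{K},\ y_1=0,\quad x_2=\frac{|K|[(m_2-m_3)m_3+m_1(2m_2+m_3)]}{2KS},\ y_2=-\frac{\sqrt3\,m_3}{2m_2^{3/2}}\sqrt{\frac{m_2^3}{S^2}},\quad x_3=\frac{|K|}{2S},\ y_3=\frac{\sqrt3}{2\sqrt{m_2}}\sqrt{\frac{m_2^3}{S^2}}.$$ Translate the origin to $m_3$ by $x\to x+x_3$, $y\to y+y_3$, $z\to z$, $p_x\to p_x-y_3$, $p_y\to p_y+x_3$, $p_z\to p_z$, discard additive constants, and then apply the symplectic scaling $(x,y,z,p_x,p_y,p_z)\to m_3^{1/3}(x,y,z,p_x,p_y,p_z)$ with multiplier $m_3^{-2/3}$. Then, writing $m_2=\mu$ and letting $m_3\to0$ (so that $m_1=1-\mu$ in the limit), the limit of the resulting Hamiltonian (in a neighborhood of $m_3$) exists and equals $$H=\tfrac12(p_x^2+p_y^2+p_z^2)+yp_x-xp_y+\tfrac18x^2-\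tfrac{3\sqrt3}{4}(1-2\mu)xy-\tfrac58y^2+\tfrac12z^2-\frac{1}{\sqrt{x^2+y^2+z^2}}.$$
   Context: The three masses $m_1,m_2,m_3$ rotate rigidly at the vertices of an equilateral triangle of side $1$ about their common center of mass (placed at the origin), with unit angular velocity; the frame rotates with them. The symplectic form is $dp_x\wedge dx+dp_y\wedge dy+dp_z\wedge dz$. A symplectic scaling with multiplier $m_3^{-2/3}$ means the Hamiltonian in the scaled variables is $m_3^{-2/3}$ times the original Hamiltonian composed with the scaling.
   Formalization: The limit is asserted for $0<\mu\le 1/2$ only, taken pointwise as $m_3$ tends to 0 from above at each fixed scaled point whose (x,y,z) is not the origin. Apart from conventions, each condition added here is assumed in the paper as well or is needed for the statement above to hold. *)

theory Defs
  imports "HOL-Analysis.Analysis"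
begin

definition K4 :: "real \<Rightarrow> real \<Rightarrow> real \<Rightarrow> real" where
  "K4 m1 m2 m3 = m2 * (m3 - m2) + m1 * (m2 + 2 * m3)"

definition S4 :: "real \<Rightarrow> real \<Rightarrow> real \<Rightarrow> real" where
  "S4 m1 m2 m3 = sqrt (m2^2 + m2 * m3 + m3^2)"

definition px1 :: "real \<Rightarrow> real \<Rightarrow> real \<Rightarrow> real" where
  "px1 m1 m2 m3 = - \<bar>K4 m1 m2 m3\<bar> * S4 m1 m2 m3 / K4 m1 m2 m3"
definition py1 :: "real \<Rightarrow> real \<Rightarrow> real \<Rightarrow> real" where
  "py1 m1 m2 m3 = 0"
definition px2 :: "real \<Rightarrow> real \<Rightarrow> real \<Rightarrow> real" where
  "px2 m1 m2 m3 = \<bar>K4 m1 m2 m3\<bar> * ((m2 - m3) * m3 + m1 * (2 * m2 + m3))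
                   / (2 * K4 m1 m2 m3 * S4 m1 m2 m3)"
definition py2 :: "real \<Rightarrow> real \<Rightarrow> real \<Rightarrow> real" where
  "py2 m1 m2 m3 = - (sqrt 3 * m3 / (2 * m2 powr (3/2))) * sqrt (m2^3 / (S4 m1 m2 m3)^2)"
definition px3 :: "real \<Rightarrow> real \<Rightarrow> real \<Rightarrow> real" where
  "px3 m1 m2 m3 = \<bar>K4 m1 m2 m3\<bar> / (2 * S4 m1 m2 m3)"
definition py3 :: "real \<Rightarrow> real \<Rightarrow> real \<Rightarrow> real" where
  "py3 m1 m2 m3 = sqrt 3 / (2 * sqrt m2) * sqrt (m2^3 / (S4 m1 m2 m3)^2)"

definition H4 :: "real \<Rightarrow> real \<Rightarrow> real \<Rightarrow>
    real \<Rightarrow> real \<Rightarrow> real \<Rightarrow> real \<Rightarrow> real \<Rightarrow> real \<Rightarrow> real" where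
  "H4 m1 m2 m3 x y z p_x p_y p_z =
     (p_x^2 + p_y^2 + p_z^2) / 2 + y * p_x - x * p_y
     - m1 / sqrt ((x - px1 m1 m2 m3)^2 + (y - py1 m1 m2 m3)^2 + z^2)
     - m2 / sqrt ((x - px2 m1 m2 m3)^2 + (y - py2 m1 m2 m3)^2 + z^2)
     - m3 / sqrt ((x - px3 m1 m2 m3)^2 + (y - py3 m1 m2 m3)^2 + z^2)"

definition H4_trans :: "real \<Rightarrow> real \<Rightarrow> real \<Rightarrow>
    real \<Rightarrow> real \<Rightarrow> real \<Rightarrow> real \<Rightarrow> real \<Rightarrow> real \<Rightarrow> real" where
  "H4_trans m1 m2 m3 x y z p_x p_y p_z =
     H4 m1 m2 m3 (x + px3 m1 m2 m3) (y + py3 m1 m2 m3) z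
        (p_x - py3 m1 m2 m3) (p_y + px3 m1 m2 m3) p_z"

text \<open>The additive constant that is discarded: the constant term of the expansion of the
  translated Hamiltonian about the new origin (position of m3), i.e.
  -(x3^2+y3^2)/2 - m1/|P3 - P1| - m2/|P3 - P2|.\<close>

definition C4 :: "real \<Rightarrow> real \<Rightarrow> real \<Rightarrow> real" where
  "C4 m1 m2 m3 =
     - ((px3 m1 m2 m3)^2 + (py3 m1 m2 m3)^2) / 2
     - m1 / sqrt ((px3 m1 m2 m3 - px1 m1 m2 m3)^2 + (py3 m1 m2 m3 - py1 m1 m2 m3)^2)
     - m2 / sqrt ((px3 m1 m2 m3 - px2 m1 m2 m3)^2 + (py3 m1 m2 m3 - py2 m1 m2 m3)^2)"

definition H4_scaled :: "real \<Rightarrow> real \<Rightarrow>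
    real \<Rightarrow> real \<Rightarrow> real \<Rightarrow> real \<Rightarrow> real \<Rightarrow> real \<Rightarrow> real" where
  "H4_scaled mu m3 x y z p_x p_y p_z =
     (let m1 = 1 - mu - m3; m2 = mu; c = m3 powr (1/3) in
      m3 powr (-(2/3)) *
        (H4_trans m1 m2 m3 (c * x) (c * y) (c * z) (c * p_x) (c * p_y) (c * p_z)
         - C4 m1 m2 m3))"

definition H_lim :: "real \<Rightarrow>
    real \<Rightarrow> real \<Rightarrow> real \<Rightarrow> real \<Rightarrow> real \<Rightarrow> real \<Rightarrow> real" where
  "H_lim mu x y z p_x p_y p_z =
     (p_x^2 + p_y^2 + p_z^2) / 2 + y * p_x - x * p_y + x^2 / 8
     - 3 * sqrt 3 / 4 * (1 - 2 * mu) * x * y - 5 / 8 * y^2 + z^2 / 2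
     - 1 / sqrt (x^2 + y^2 + z^2)"

end

theory Submission
  imports Defs
begin

lemma L1:
  fixes a b c w :: real
  assumes "c \<noteq> 0" "w > 0" "w^2 = 1 + c*(2*a + c*b)"
  shows "(1 - 1/w - c*a)/c^2 = (b - a*(2*a+c*b) - a*(2*a+c*b)/(1+w))/(w*(w+1))"
proof -
  have s1: "1 + w \<noteq> 0" "w + 1 \<noteq> 0" "w \<noteq> 0" using assms by auto
  have "(w - 1 - c*a*w) * (w+1)^2 - c^2*(b*(1+w) - a*(2*a+c*b)*(2+w)) = (w^2 - (1 + c*(2*a + c*b))) * ((w+1) - c*a*(2+w))"
    by (simp add: algebra_simps power2_eq_square power3_eq_cube)
  then have e: "(w - 1 - c*a*w) * (w+1)^2 = c^2*(b*(1+w) - a*(2*a+c*b)*(2+w))" using assms(3) by simp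
  have l: "(1 - 1/w - c*a)/c^2 = (w - 1 - c*a*w)*(w+1)^2/(c^2*w*(w+1)^2)" using assms(1) s1 by (simp add: field_simps)
  have r1: "b - a*(2*a+c*b) - a*(2*a+c*b)/(1+w) = (b*(1+w) - a*(2*a+c*b)*(2+w))/(1+w)"
    using s1 by (simp add: field_simps)
  have r: "(b - a*(2*a+c*b) - a*(2*a+c*b)/(1+w))/(w*(w+1)) = c^2*(b*(1+w) - a*(2*a+c*b)*(2+w))/(c^2*w*(w+1)^2)"
    unfolding r1 using assms(1) s1 by (simp add: power2_eq_square mult.commute mult.left_commute add.commute)
  show ?thesis using l r e by simp
qed

lemma alg:
  fixes c sb w1 w2 m m1 mu P Q x y z px py pz a1 a2 :: real
  assumes "c \<noteq> 0" "sb > 0" "m = c^3" "x*P + y*Q = m1*a1 + mu*a2" "w1 \<noteq> 0" "w2 \<noteq> 0"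
  shows "(1/c^2) * (((c*px - Q)^2 + (c*py + P)^2 + (c*pz)^2)/2 + (c*y + Q)*(c*px - Q) - (c*x + P)*(c*py + P)
     - m1/w1 - mu/w2 - m/(c * sb) - (-(P^2+Q^2)/2 - m1/sqrt 1 - mu/sqrt 1))
   = (px^2+py^2+pz^2)/2 + y*px - x*py - 1/sb + m1*((1-1/w1-c*a1)/c^2) + mu*((1-1/w2-c*a2)/c^2)"
proof -
  have kin: "((c*px - Q)^2 + (c*py + P)^2 + (c*pz)^2)/2 + (c*y + Q)*(c*px - Q) - (c*x + P)*(c*py + P)
     = c^2*((px^2+py^2+pz^2)/2 + y*px - x*py) - c*(x*P + y*Q) - (P^2+Q^2)/2"
    by (simp add: field_simps power2_eq_square)
  show ?thesis unfolding kin assms(4) assms(3) using assms(1,2,5,6)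
    by (simp add: field_simps power2_eq_square power3_eq_cube)
qed

definition Sf :: "real \<Rightarrow> real \<Rightarrow> real" where "Sf mu m = sqrt (mu^2 + mu*m + m^2)"

lemma pw: assumes "mu > 0" shows "mu powr (3/2) = mu * sqrt mu"
proof -
  have "mu powr (3/2) = mu powr (1 + 1/2)" by simp
  also have "\<dots> = mu powr 1 * mu powr (1/2)" by (rule powr_add)
  finally show ?thesis using assms by (simp add: powr_half_sqrt)
qed

lemma positions:
  fixes mu m :: real
  assumes "0 < mu" "mu \<le> 1/2" "0 < m" "m < 1/2"
  defines "S \<equiv> Sf mu m"
  shows "S > 0" "S^2 = mu^2 + mu*m + m^2"
    "px3 (1-mu-m) mu m - px1 (1-mu-m) mu m = (mu + 2*m)/(2*S)"
    "py3 (1-mu-m) mu m - py1 (1-mu-m) mu m = sqrt 3 * mu/(2*S)"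
    "px3 (1-mu-m) mu m - px2 (1-mu-m) mu m = (m - mu)/(2*S)"
    "py3 (1-mu-m) mu m - py2 (1-mu-m) mu m = sqrt 3 * (mu + m)/(2*S)"
    "x * px3 (1-mu-m) mu m + y * py3 (1-mu-m) mu m
      = (1-mu-m) * (((mu + 2*m)/(2*S)) * x + (sqrt 3 * mu/(2*S)) * y)
        + mu * (((m - mu)/(2*S)) * x + (sqrt 3 * (mu + m)/(2*S)) * y)"
proof -
  have r: "mu^2 + mu*m + m^2 > 0" using assms by (simp add: add_pos_pos)
  show Sp: "S > 0" unfolding S_def Sf_def using r by simp
  show S2: "S^2 = mu^2 + mu*m + m^2" unfolding S_def Sf_def using r by simp
  have Kf: "K4 (1-mu-m) mu m = mu*(1-2*mu) + 2*m*(1-mu-m)" unfolding K4_def by (simp add: algebra_simps)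
  have "mu*(1-2*mu) \<ge> 0" using assms by simp
  moreover have "2*m*(1-mu-m) > 0" using assms by simp
  ultimately have Kp: "K4 (1-mu-m) mu m > 0" using Kf by linarith
  have S4: "S4 (1-mu-m) mu m = S" unfolding S_def Sf_def S4_def by simp
  have x1: "px1 (1-mu-m) mu m = - S" unfolding px1_def S4 using Kp by simp
  have x3: "px3 (1-mu-m) mu m = K4 (1-mu-m) mu m/(2*S)" unfolding px3_def S4 using Kp by simp
  have x2: "px2 (1-mu-m) mu m = ((mu - m)*m + (1-mu-m)*(2*mu+m))/(2*S)" unfolding px2_def S4 using Kp Sp by simp
  have sq: "sqrt (mu^3/S^2) = mu * sqrt mu / S" using Sp assms(1)
    by (simp add: real_sqrt_divide power3_eq_cube real_sqrt_mult)
  have y3: "py3 (1-mu-m) mu m = sqrt 3 * mu/(2*S)" unfolding py3_def S4 sq using assms(1) Sp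
    by (simp add: field_simps)
  have y2: "py2 (1-mu-m) mu m = - sqrt 3 * m/(2*S)" unfolding py2_def S4 sq pw[OF assms(1)] using assms(1) Sp
    by (simp add: field_simps)
  show "px3 (1-mu-m) mu m - px1 (1-mu-m) mu m = (mu + 2*m)/(2*S)"
    unfolding x3 x1 Kf using Sp S2 by (simp add: field_simps) (simp add: algebra_simps power2_eq_square)
  show "py3 (1-mu-m) mu m - py1 (1-mu-m) mu m = sqrt 3 * mu/(2*S)" unfolding y3 py1_def by simp
  show "px3 (1-mu-m) mu m - px2 (1-mu-m) mu m = (m - mu)/(2*S)"
    unfolding x3 x2 Kf using Sp by (simp add: field_simps)
  show "py3 (1-mu-m) mu m - py2 (1-mu-m) mu m = sqrt 3 * (mu + m)/(2*S)"
    unfolding y3 y2 using Sp by (simp add: field_simps)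
  show "x * px3 (1-mu-m) mu m + y * py3 (1-mu-m) mu m
      = (1-mu-m) * (((mu + 2*m)/(2*S)) * x + (sqrt 3 * mu/(2*S)) * y)
        + mu * (((m - mu)/(2*S)) * x + (sqrt 3 * (mu + m)/(2*S)) * y)"
    unfolding x3 y3 Kf using Sp by (simp add: field_simps)
qed

definition a1f :: "real \<Rightarrow> real \<Rightarrow> real \<Rightarrow> real \<Rightarrow> real" where
  "a1f mu m x y = ((mu + 2*m)/(2*Sf mu m)) * x + (sqrt 3 * mu/(2*Sf mu m)) * y"
definition a2f :: "real \<Rightarrow> real \<Rightarrow> real \<Rightarrow> real \<Rightarrow> real" where
  "a2f mu m x y = ((m - mu)/(2*Sf mu m)) * x + (sqrt 3 * (mu + m)/(2*Sf mu m)) * y"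
definition Ef :: "real \<Rightarrow> real \<Rightarrow> real \<Rightarrow> real" where
  "Ef a b c = (b - a*(2*a+c*b) - a*(2*a+c*b)/(1 + sqrt (1 + c*(2*a+c*b))))
     / (sqrt (1 + c*(2*a+c*b)) * (sqrt (1 + c*(2*a+c*b)) + 1))"
definition Fe :: "real \<Rightarrow> real \<Rightarrow> real \<Rightarrow> real \<Rightarrow> real \<Rightarrow> real \<Rightarrow> real \<Rightarrow> real \<Rightarrow> real \<Rightarrow> real" where
  "Fe mu x y z px py pz m c = (px^2+py^2+pz^2)/2 + y*px - x*py - 1/sqrt (x^2+y^2+z^2)
     + (1-mu-m) * Ef (a1f mu m x y) (x^2+y^2+z^2) c + mu * Ef (a2f mu m x y) (x^2+y^2+z^2) c"

lemma rad:
  fixes c x y z P P1 Q Q1 A B :: real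
  assumes "P - P1 = A" "Q - Q1 = B" "A^2 + B^2 = 1"
  shows "(c*x + P - P1)^2 + (c*y + Q - Q1)^2 + (c*z)^2 = 1 + c*(2*(A*x+B*y) + c*(x^2+y^2+z^2))"
proof -
  have "(c*x + P - P1)^2 + (c*y + Q - Q1)^2 + (c*z)^2 = (c*x + A)^2 + (c*y + B)^2 + (c*z)^2"
    using assms(1,2) by (simp add: algebra_simps)
  also have "\<dots> = (A^2 + B^2) + c*(2*(A*x+B*y) + c*(x^2+y^2+z^2))"
    by (simp add: algebra_simps power2_eq_square)
  finally show ?thesis using assms(3) by simp
qed

lemma Ef_eq:
  fixes a b c :: real
  assumes "c \<noteq> 0" "1 + c*(2*a+c*b) > 0"
  shows "Ef a b c = (1 - 1/sqrt (1 + c*(2*a+c*b)) - c*a)/c^2"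
  unfolding Ef_def
  by (rule L1[symmetric]) (use assms in auto)

lemma main_eq:
  fixes mu m c x y z px py pz :: real
  assumes "0 < mu" "mu \<le> 1/2" "0 < m" "m < 1/2" "c > 0" "c^3 = m"
    and "(x, y, z) \<noteq> (0, 0, 0)"
    and p1: "1 + c*(2*a1f mu m x y + c*(x^2+y^2+z^2)) > 0"
    and p2: "1 + c*(2*a2f mu m x y + c*(x^2+y^2+z^2)) > 0"
  shows "(1/c^2) * (H4_trans (1-mu-m) mu m (c*x) (c*y) (c*z) (c*px) (c*py) (c*pz) - C4 (1-mu-m) mu m)
     = Fe mu x y z px py pz m c"
proof -
  note P = positions[OF assms(1-4)]
  define S where "S = Sf mu m"
  have AB1: "((mu + 2*m)/(2*S))^2 + (sqrt 3 * mu/(2*S))^2 = 1"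
    using P(1,2) unfolding S_def[symmetric] by (simp add: field_simps power2_eq_square)
  have AB2': "(m-mu)^2 + 3*(mu+m)^2 = 4*S^2" using P(2) unfolding S_def[symmetric] by (simp add: power2_eq_square algebra_simps)
  have AB2: "((m - mu)/(2*S))^2 + (sqrt 3 * (mu + m)/(2*S))^2 = 1"
    using P(1) AB2' unfolding S_def[symmetric] by (simp add: power_divide power_mult_distrib add_divide_distrib[symmetric])
  define b where "b = x^2+y^2+z^2"
  have bpos: "b > 0" using assms(7) unfolding b_def
    by (smt (verit) prod.inject zero_le_power2 zero_less_power2)
  have r1: "(c*x + px3 (1-mu-m) mu m - px1 (1-mu-m) mu m)^2 + (c*y + py3 (1-mu-m) mu m - py1 (1-mu-m) mu m)^2 + (c*z)^2
      = 1 + c*(2*a1f mu m x y + c*(x^2+y^2+z^2))"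
    unfolding a1f_def by (rule rad) (use P AB1 in \<open>auto simp: S_def\<close>)
  have r2: "(c*x + px3 (1-mu-m) mu m - px2 (1-mu-m) mu m)^2 + (c*y + py3 (1-mu-m) mu m - py2 (1-mu-m) mu m)^2 + (c*z)^2
      = 1 + c*(2*a2f mu m x y + c*(x^2+y^2+z^2))"
    unfolding a2f_def by (rule rad) (use P AB2 in \<open>auto simp: S_def\<close>)
  have r3: "sqrt ((c*x + px3 (1-mu-m) mu m - px3 (1-mu-m) mu m)^2 + (c*y + py3 (1-mu-m) mu m - py3 (1-mu-m) mu m)^2 + (c*z)^2)
      = c * sqrt b"
  proof -
    have "(c*x + px3 (1-mu-m) mu m - px3 (1-mu-m) mu m)^2 + (c*y + py3 (1-mu-m) mu m - py3 (1-mu-m) mu m)^2 + (c*z)^2 = c^2 * b"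
      unfolding b_def by (simp add: algebra_simps power2_eq_square)
    then show ?thesis using assms(5) bpos by (simp add: real_sqrt_mult)
  qed
  have c1: "(px3 (1-mu-m) mu m - px1 (1-mu-m) mu m)^2 + (py3 (1-mu-m) mu m - py1 (1-mu-m) mu m)^2 = 1"
    using P AB1 by (simp add: S_def)
  have c2: "(px3 (1-mu-m) mu m - px2 (1-mu-m) mu m)^2 + (py3 (1-mu-m) mu m - py2 (1-mu-m) mu m)^2 = 1"
    using P AB2 by (simp add: S_def)
  have lin: "x * px3 (1-mu-m) mu m + y * py3 (1-mu-m) mu m = (1-mu-m) * a1f mu m x y + mu * a2f mu m x y"
    using P(7) unfolding a1f_def a2f_def S_def .
  have w1: "sqrt (1 + c*(2*a1f mu m x y + c*(x^2+y^2+z^2))) \<noteq> 0" using p1 by simp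
  have w2: "sqrt (1 + c*(2*a2f mu m x y + c*(x^2+y^2+z^2))) \<noteq> 0" using p2 by simp
  have E1: "Ef (a1f mu m x y) (x^2+y^2+z^2) c = (1 - 1/sqrt (1 + c*(2*a1f mu m x y + c*(x^2+y^2+z^2))) - c*a1f mu m x y)/c^2"
    by (rule Ef_eq) (use assms p1 in auto)
  have E2: "Ef (a2f mu m x y) (x^2+y^2+z^2) c = (1 - 1/sqrt (1 + c*(2*a2f mu m x y + c*(x^2+y^2+z^2))) - c*a2f mu m x y)/c^2"
    by (rule Ef_eq) (use assms p2 in auto)
  have H: "H4_trans (1-mu-m) mu m (c*x) (c*y) (c*z) (c*px) (c*py) (c*pz) - C4 (1-mu-m) mu m
    = ((c*px - py3 (1-mu-m) mu m)^2 + (c*py + px3 (1-mu-m) mu m)^2 + (c*pz)^2)/2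
      + (c*y + py3 (1-mu-m) mu m)*(c*px - py3 (1-mu-m) mu m) - (c*x + px3 (1-mu-m) mu m)*(c*py + px3 (1-mu-m) mu m)
     - (1-mu-m)/sqrt (1 + c*(2*a1f mu m x y + c*(x^2+y^2+z^2)))
     - mu/sqrt (1 + c*(2*a2f mu m x y + c*(x^2+y^2+z^2))) - m/(c * sqrt b)
     - (-((px3 (1-mu-m) mu m)^2+(py3 (1-mu-m) mu m)^2)/2 - (1-mu-m)/sqrt 1 - mu/sqrt 1)"
    unfolding H4_trans_def H4_def C4_def r1 r2 r3 c1 c2 by simp
  show ?thesis
    apply (unfold Fe_def E1 E2)
    apply (unfold b_def[symmetric])
    apply (unfold H)
    apply (unfold b_def[symmetric])
    by (rule alg) (use assms(5,6) bpos lin w1 w2 in \<open>auto simp: b_def\<close>)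
qed

lemma cube_root:
  fixes m :: real assumes "m > 0"
  shows "m powr (1/3) > 0" "(m powr (1/3))^3 = m" "m powr (-(2/3)) = 1/(m powr (1/3))^2"
proof -
  have p: "m powr (1/3) > 0" using assms by simp
  then show "m powr (1/3) > 0" .
  have "(m powr (1/3))^3 = (m powr (1/3)) powr (real 3)" using powr_realpow[OF p, of 3] by simp
  also have "\<dots> = m powr ((1/3) * real 3)" by (rule powr_powr)
  also have "\<dots> = m" using assms by simp
  finally show "(m powr (1/3))^3 = m" .
  have "(m powr (1/3))^2 = (m powr (1/3)) powr (real 2)" using powr_realpow[OF p, of 2] by simp
  also have "\<dots> = m powr ((1/3) * real 2)" by (rule powr_powr)
  also have "\<dots> = m powr (2/3)" by (rule arg_cong[of _ _ "\<lambda>t. m powr t"]) simp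
  finally have q: "(m powr (1/3))^2 = m powr (2/3)" .
  have "m powr (-(2/3)) = inverse (m powr (2/3))" by (rule powr_minus)
  then show "m powr (-(2/3)) = 1/(m powr (1/3))^2" unfolding q by (simp only: inverse_eq_divide)
qed

lemma Ef0: "Ef a b 0 = (b - 3*a^2)/2"
  by (simp add: Ef_def power2_eq_square field_simps)

lemma Fe0:
  assumes "mu > 0"
  shows "Fe mu x y z px py pz 0 0 = H_lim mu x y z px py pz"
proof -
  have S0: "Sf mu 0 = mu" using assms by (simp add: Sf_def)
  have a1: "a1f mu 0 x y = (x + sqrt 3 * y)/2" using assms unfolding a1f_def S0 by (simp add: field_simps)
  have a2: "a2f mu 0 x y = (- x + sqrt 3 * y)/2" using assms unfolding a2f_def S0 by (simp add: field_simps)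
  have a1s: "(a1f mu 0 x y)^2 = (x^2 + 2 * sqrt 3 * x * y + 3*y^2)/4"
    unfolding a1 power_divide power2_sum power_mult_distrib by simp
  have a2s: "(a2f mu 0 x y)^2 = (x^2 - 2 * sqrt 3 * x * y + 3*y^2)/4"
    unfolding a2 power_divide power2_sum power_mult_distrib by simp
  have "Fe mu x y z px py pz 0 0 = (px^2+py^2+pz^2)/2 + y*px - x*py - 1/sqrt (x^2+y^2+z^2)
     + (1-mu) * (((x^2+y^2+z^2) - 3*((x^2 + 2 * sqrt 3 * x * y + 3*y^2)/4))/2)
     + mu * (((x^2+y^2+z^2) - 3*((x^2 - 2 * sqrt 3 * x * y + 3*y^2)/4))/2)"
    unfolding Fe_def Ef0 a1s a2s by simp
  also have "\<dots> = H_lim mu x y z px py pz"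
    unfolding H_lim_def by (simp add: field_simps)
  finally show ?thesis .
qed

theorem theorem1:
  fixes mu x y z p_x p_y p_z :: real
  assumes "0 < mu" and "mu \<le> 1 / 2"
    and "(x, y, z) \<noteq> (0, 0, 0)"
  shows "((\<lambda>m3. H4_scaled mu m3 x y z p_x p_y p_z) \<longlongrightarrow> H_lim mu x y z p_x p_y p_z)
           (at_right 0)"
proof -
  have hid: "((\<lambda>m::real. m) \<longlongrightarrow> 0) (at_right 0)" by (rule tendsto_ident_at)
  have ev0: "eventually (\<lambda>m::real. 0 \<le> m) (at_right 0)"
    by (simp add: eventually_at_right_less eventually_mono less_imp_le eventually_at_filter)
  have hc: "((\<lambda>m::real. m powr (1/3)) \<longlongrightarrow> 0) (at_right 0)"
    by (rule tendsto_zero_powrI[OF hid tendsto_const ev0]) simp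
  have bpos: "x^2+y^2+z^2 > 0" using assms(3)
    by (smt (verit) prod.inject zero_le_power2 zero_less_power2)
  have lim: "((\<lambda>m. Fe mu x y z p_x p_y p_z m (m powr (1/3))) \<longlongrightarrow> Fe mu x y z p_x p_y p_z 0 0) (at_right 0)"
    unfolding Fe_def Ef_def a1f_def a2f_def Sf_def
    by (intro tendsto_intros hc hid) (use assms bpos in auto)
  have l1: "((\<lambda>m. 1 + m powr (1/3) * (2*a1f mu m x y + m powr (1/3) * (x^2+y^2+z^2))) \<longlongrightarrow>
      1 + 0 * (2*a1f mu 0 x y + 0 * (x^2+y^2+z^2))) (at_right 0)"
    unfolding a1f_def Sf_def
    by (intro tendsto_intros hc hid) (use assms in auto)
  have l2: "((\<lambda>m. 1 + m powr (1/3) * (2*a2f mu m x y + m powr (1/3) * (x^2+y^2+z^2))) \<longlongrightarrow>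
      1 + 0 * (2*a2f mu 0 x y + 0 * (x^2+y^2+z^2))) (at_right 0)"
    unfolding a2f_def Sf_def
    by (intro tendsto_intros hc hid) (use assms in auto)
  have e1: "eventually (\<lambda>m. 1 + m powr (1/3) * (2*a1f mu m x y + m powr (1/3) * (x^2+y^2+z^2)) > 0) (at_right 0)"
    using order_tendstoD(1)[OF l1, of 0] by simp
  have e2: "eventually (\<lambda>m. 1 + m powr (1/3) * (2*a2f mu m x y + m powr (1/3) * (x^2+y^2+z^2)) > 0) (at_right 0)"
    using order_tendstoD(1)[OF l2, of 0] by simp
  have e3: "eventually (\<lambda>m::real. 0 < m \<and> m < 1/2) (at_right 0)"
    using eventually_at_right_real[of 0 "1/2"] by (auto elim!: eventually_mono)
  have eq: "eventually (\<lambda>m. Fe mu x y z p_x p_y p_z m (m powr (1/3)) = H4_scaled mu m x y z p_x p_y p_z) (at_right 0)"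
    using e1 e2 e3
  proof eventually_elim
    case (elim m)
    then have m: "0 < m" "m < 1/2" by auto
    note cr = cube_root[OF m(1)]
    show ?case
      unfolding H4_scaled_def Let_def cr(3)
      by (rule main_eq[symmetric]) (use assms m cr elim in auto)
  qed
  show ?thesis
    using Lim_transform_eventually[OF lim eq] Fe0[OF assms(1)] by simp
qed

end
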